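(* Let $V=\{1,\dots,p\}$ and $F:2^V\to\mathbb{R}$ be submodular, nondecreasing, with $F(\varnothing)=0$ and $F(\{k\})>0$ for all $k$; let $\Omega(w)=f(|w|)$ with $f$ the Lovász extension of $F$. Let $X\in\mathbb{R}^{n\times p}$ be fixed with $X^\top X$ invertible, let $\lambda>0$, and let $y\in\mathbb{R}^n$ be a random vector having a density that is absolutely continuous with respect to Lebesgue measure. Then the minimizer $\hat w$ of $$\min_{w\in\mathbb{R}^p}\frac{1}{2n}\|y-Xw\|_2^2+\lambda\Omega(w)$$ is unique and, with probability one, its support $\mathrm{Supp}(\hat w)$ is a stable set.
   Context: The Lovász extension $f$ of $F$: for $w\in\mathbb{R}_+^p$ with $w_{j_1}\geqslant\cdots\geqslant w_{j_p}\geqslant0$, $f(w)=\sum_k w_{j_k}[F(\{j_1,\dots,j_k\})-F(\{j_1,\dots,j_{k-1}\})]$. $\mathrm{Supp}(w)=\{j:w_j\neq0\}$. A set $A\subset V$ is stable if every strict superset $B\supsetneq A$ satisfies $F(B)>F(A)$. *)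

theory Defs
  imports "HOL-Analysis.Analysis" "HOL-Probability.Probability"
begin

text \<open>Ground set V is the finite type 'p (V = UNIV). Set functions F :: 'p set => real.\<close>

definition submodular :: "('p set \<Rightarrow> real) \<Rightarrow> bool" where
  "submodular F \<longleftrightarrow> (\<forall>A B. F (A \<union> B) + F (A \<inter> B) \<le> F A + F B)"

definition nondecreasing_setfun :: "('p set \<Rightarrow> real) \<Rightarrow> bool" where
  "nondecreasing_setfun F \<longleftrightarrow> (\<forall>A B. A \<subseteq> B \<longrightarrow> F A \<le> F B)"

text \<open>Lovasz extension, following the paper: order the indices j_1,...,j_p so that
  w_{j_1} >= ... >= w_{j_p} (a list enumerating V sorted decreasingly by w; the
  value does not depend on how ties are broken), then
  f(w) = sum_k w_{j_k} [F({j_1..j_k}) - F({j_1..j_{k-1}})].\<close>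

definition decreasing_order :: "real ^ 'p \<Rightarrow> 'p list \<Rightarrow> bool" where
  "decreasing_order w js \<longleftrightarrow> distinct js \<and> set js = UNIV \<and> sorted_wrt (\<lambda>i j. w $ j \<le> w $ i) js"

definition lovasz_ext :: "('p::finite set \<Rightarrow> real) \<Rightarrow> real ^ 'p \<Rightarrow> real" where
  "lovasz_ext F w =
     (let js = (SOME js. decreasing_order w js) in
      \<Sum>k<length js. w $ (js ! k) * (F (set (take (Suc k) js)) - F (set (take k js))))"

definition Omega :: "('p::finite set \<Rightarrow> real) \<Rightarrow> real ^ 'p \<Rightarrow> real" where
  "Omega F w = lovasz_ext F (\<chi> i. \<bar>w $ i\<bar>)"

definition Supp :: "real ^ 'p \<Rightarrow> 'p set" where
  "Supp w = {j. w $ j \<noteq> 0}"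

definition stable_set :: "('p set \<Rightarrow> real) \<Rightarrow> 'p set \<Rightarrow> bool" where
  "stable_set F A \<longleftrightarrow> (\<forall>B. A \<subset> B \<longrightarrow> F B > F A)"

definition objective ::
  "('p::finite set \<Rightarrow> real) \<Rightarrow> real ^ 'p ^ 'n::finite \<Rightarrow> real \<Rightarrow> real ^ 'n \<Rightarrow> real ^ 'p \<Rightarrow> real" where
  "objective F X lam y w = (1 / (2 * real CARD('n))) * (norm (y - X *v w))\<^sup>2 + lam * Omega F w"

definition is_minimizer ::
  "('p::finite set \<Rightarrow> real) \<Rightarrow> real ^ 'p ^ 'n::finite \<Rightarrow> real \<Rightarrow> real ^ 'n \<Rightarrow> real ^ 'p \<Rightarrow> bool" where
  "is_minimizer F X lam y w \<longleftrightarrow> (\<forall>v. objective F X lam y w \<le> objective F X lam y v)"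

end

theory Submission
  imports Defs
begin


definition pos :: "'a list \<Rightarrow> 'a \<Rightarrow> nat" where
  "pos js i = (THE a. a < length js \<and> js ! a = i)"

lemma pos_nth: "distinct js \<Longrightarrow> a < length js \<Longrightarrow> pos js (js ! a) = a"
  unfolding pos_def
  by (rule the_equality) (auto simp: nth_eq_iff_index_eq)

lemma pos_in: "distinct js \<Longrightarrow> i \<in> set js \<Longrightarrow> pos js i < length js \<and> js ! pos js i = i"
  by (metis in_set_conv_nth pos_nth)

definition gv :: "('p::finite set \<Rightarrow> real) \<Rightarrow> 'p list \<Rightarrow> real ^ 'p" where
  "gv F js = (\<chi> i. F (set (take (Suc (pos js i)) js)) - F (set (take (pos js i) js)))"

definition perm_list :: "'p::finite list \<Rightarrow> bool" where
  "perm_list js \<longleftrightarrow> distinct js \<and> set js = UNIV"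

lemma lsum_gv:
  fixes F :: "'p::finite set \<Rightarrow> real"
  assumes "perm_list js"
  shows "(\<Sum>k<length js. w $ (js ! k) * (F (set (take (Suc k) js)) - F (set (take k js))))
         = w \<bullet> gv F js"
proof -
  have d: "distinct js" and s: "set js = UNIV" using assms by (auto simp: perm_list_def)
  have inj: "inj_on ((!) js) {..<length js}" using d by (simp add: inj_on_nth)
  have img: "((!) js) ` {..<length js} = UNIV" using s by (auto simp: set_conv_nth)
  have "w \<bullet> gv F js = (\<Sum>i\<in>UNIV. w $ i * gv F js $ i)" by (simp add: inner_vec_def)
  also have "\<dots> = (\<Sum>k\<in>{..<length js}. w $ (js!k) * gv F js $ (js!k))"
    by (subst img[symmetric], subst sum.reindex[OF inj]) simp
  also have "\<dots> = (\<Sum>k<length js. w $ (js ! k) * (F (set (take (Suc k) js)) - F (set (take k js))))"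
    by (rule sum.cong) (auto simp: gv_def pos_nth d)
  finally show ?thesis by simp
qed

lemma gv_nonneg:
  assumes "nondecreasing_setfun F"
  shows "0 \<le> gv F js $ i"
  using assms unfolding gv_def nondecreasing_setfun_def
  by (simp add: set_take_subset_set_take)

lemma gv_poly:
  fixes F :: "'p::finite set \<Rightarrow> real"
  assumes sub: "submodular F" and F0: "F {} = 0" and pl: "perm_list js"
  shows "(\<Sum>i\<in>A. gv F js $ i) \<le> F A"
proof -
  have d: "distinct js" and s: "set js = UNIV" using pl by (auto simp: perm_list_def)
  have "\<forall>A. (\<Sum>i\<in>A \<inter> set (take m js). gv F js $ i) \<le> F (A \<inter> set (take m js))"
    if "m \<le> length js" for m
    using that
  proof (induction m)
    case 0
    then show ?case using F0 by simp
  next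
    case (Suc m)
    have ml: "m < length js" using Suc.prems by simp
    define x where "x = js ! m"
    have tk: "set (take (Suc m) js) = insert x (set (take m js))"
      using ml by (simp add: x_def take_Suc_conv_app_nth)
    have xn: "x \<notin> set (take m js)"
      using d ml unfolding x_def
      by (metis distinct_take id_take_nth_drop distinct_append ml not_distinct_conv_prefix
          x_def Suc.prems in_set_conv_nth length_take min_less_iff_conj nth_eq_iff_index_eq
          nth_take order_less_irrefl)
    have gx: "gv F js $ x = F (insert x (set (take m js))) - F (set (take m js))"
      using tk by (simp add: gv_def x_def pos_nth d ml)
    show ?case
    proof
      fix A
      have IH: "(\<Sum>i\<in>A \<inter> set (take m js). gv F js $ i) \<le> F (A \<inter> set (take m js))"
        using Suc.IH Suc.prems by simp
      show "(\<Sum>i\<in>A \<inter> set (take (Suc m) js). gv F js $ i) \<le> F (A \<inter> set (take (Suc m) js))"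
      proof (cases "x \<in> A")
        case False
        then have "A \<inter> set (take (Suc m) js) = A \<inter> set (take m js)" using tk by auto
        then show ?thesis using IH by simp
      next
        case True
        let ?T = "set (take m js)"
        have e: "A \<inter> set (take (Suc m) js) = insert x (A \<inter> ?T)" using tk True by auto
        have sm: "F (insert x (A \<inter> ?T) \<union> ?T) + F (insert x (A \<inter> ?T) \<inter> ?T) \<le> F (insert x (A \<inter> ?T)) + F ?T"
          using sub unfolding submodular_def by blast
        have u: "insert x (A \<inter> ?T) \<union> ?T = insert x ?T" by auto
        have i: "insert x (A \<inter> ?T) \<inter> ?T = A \<inter> ?T" using xn by auto
        have "(\<Sum>i\<in>A \<inter> set (take (Suc m) js). gv F js $ i) = gv F js $ x + (\<Sum>i\<in>A \<inter> ?T. gv F js $ i)"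
          using e xn by simp
        also have "\<dots> \<le> F (insert x (A \<inter> ?T))" using IH gx sm unfolding u i by linarith
        finally show ?thesis using e by simp
      qed
    qed
  qed
  from this[of "length js"] show ?thesis using s by simp
qed

lemma abel:
  fixes F :: "'p::finite set \<Rightarrow> real"
  assumes F0: "F {} = 0" and d: "distinct js"
    and srt: "sorted_wrt (\<lambda>i j. w $ j \<le> w $ i) js"
    and poly: "\<And>A. (\<Sum>i\<in>A. s $ i) \<le> F A"
  shows "m \<le> length js \<Longrightarrow> 0 \<le> c \<Longrightarrow> (\<forall>a<m. c \<le> w $ (js ! a)) \<Longrightarrow>
    c * (F (set (take m js)) - (\<Sum>i\<in>set (take m js). s $ i)) \<le>
    (\<Sum>k<m. w $ (js ! k) * (F (set (take (Suc k) js)) - F (set (take k js))))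
      - (\<Sum>i\<in>set (take m js). s $ i * w $ i)"
proof (induction m arbitrary: c)
  case 0
  then show ?case using F0 by simp
next
  case (Suc m)
  have ml: "m < length js" using Suc.prems by simp
  define x where "x = js ! m"
  let ?T = "set (take m js)"
  have tk: "set (take (Suc m) js) = insert x ?T"
    using ml by (simp add: x_def take_Suc_conv_app_nth)
  have xn: "x \<notin> ?T"
    using d ml unfolding x_def
    by (metis in_set_conv_nth length_take min_less_iff_conj nth_eq_iff_index_eq nth_take order_less_irrefl)
  have cx: "c \<le> w $ x" using Suc.prems(3) by (simp add: x_def)
  have wx0: "0 \<le> w $ x" using cx Suc.prems(2) by simp
  have wxa: "\<forall>a<m. w $ x \<le> w $ (js ! a)"
    using srt ml unfolding sorted_wrt_iff_nth_less x_def by auto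
  have IH: "w $ x * (F ?T - (\<Sum>i\<in>?T. s $ i)) \<le>
    (\<Sum>k<m. w $ (js ! k) * (F (set (take (Suc k) js)) - F (set (take k js))))
      - (\<Sum>i\<in>?T. s $ i * w $ i)"
    using Suc.IH[of "w $ x"] ml wx0 wxa by simp
  have pins: "0 \<le> F (insert x ?T) - ((\<Sum>i\<in>?T. s $ i) + s $ x)"
    using poly[of "insert x ?T"] xn by simp
  have "c * (F (insert x ?T) - ((\<Sum>i\<in>?T. s $ i) + s $ x)) \<le>
        w $ x * (F (insert x ?T) - ((\<Sum>i\<in>?T. s $ i) + s $ x))"
    using mult_right_mono[OF cx pins] .
  also have "\<dots> = w $ x * (F ?T - (\<Sum>i\<in>?T. s $ i)) + w $ x * (F (insert x ?T) - F ?T) - s $ x * w $ x"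
    by (simp add: algebra_simps)
  finally have key: "c * (F (insert x ?T) - ((\<Sum>i\<in>?T. s $ i) + s $ x)) \<le>
     (\<Sum>k<m. w $ (js ! k) * (F (set (take (Suc k) js)) - F (set (take k js))))
      - (\<Sum>i\<in>?T. s $ i * w $ i) + w $ x * (F (insert x ?T) - F ?T) - s $ x * w $ x"
    using IH by linarith
  show ?case using key xn tk by (simp add: x_def algebra_simps)
qed

lemma abel_full:
  fixes F :: "'p::finite set \<Rightarrow> real"
  assumes F0: "F {} = 0" and pl: "perm_list js"
    and srt: "sorted_wrt (\<lambda>i j. w $ j \<le> w $ i) js"
    and w0: "\<And>i. 0 \<le> w $ i"
    and poly: "\<And>A. (\<Sum>i\<in>A. s $ i) \<le> F A"
  shows "s \<bullet> w \<le> w \<bullet> gv F js"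
proof -
  have d: "distinct js" and st: "set js = UNIV" using pl by (auto simp: perm_list_def)
  have "0 * (F (set (take (length js) js)) - (\<Sum>i\<in>set (take (length js) js). s $ i)) \<le>
    (\<Sum>k<length js. w $ (js ! k) * (F (set (take (Suc k) js)) - F (set (take k js))))
      - (\<Sum>i\<in>set (take (length js) js). s $ i * w $ i)"
    by (rule abel[OF F0 d srt poly]) (auto simp: w0)
  then show ?thesis using lsum_gv[OF pl, of w F] st by (simp add: inner_vec_def)
qed

lemma ex_dec: "\<exists>js. decreasing_order (w :: real ^ 'p::finite) js"
proof -
  obtain xs :: "'p list" where xs: "set xs = UNIV" "distinct xs"
    using finite_distinct_list[OF finite_class.finite_UNIV] by blast
  define js where "js = sort_key (\<lambda>i. - (w $ i)) xs"
  have "distinct js" by (simp add: js_def xs)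
  moreover have "set js = UNIV" by (simp add: js_def xs)
  moreover have "sorted (map (\<lambda>i. - (w $ i)) js)" by (simp add: js_def)
  then have "sorted_wrt (\<lambda>i j. w $ j \<le> w $ i) js"
    by (simp add: sorted_map)
  ultimately show ?thesis unfolding decreasing_order_def by blast
qed

lemma dec_perm: "decreasing_order w js \<Longrightarrow> perm_list js"
  by (simp add: decreasing_order_def perm_list_def)

lemma lovasz_char:
  fixes F :: "'p::finite set \<Rightarrow> real"
  assumes sub: "submodular F" and F0: "F {} = 0"
    and dec: "decreasing_order w js" and w0: "\<And>i. 0 \<le> w $ i"
  shows "lovasz_ext F w = w \<bullet> gv F js"
proof -
  define js0 where "js0 = (SOME js. decreasing_order w js)"
  have d0: "decreasing_order w js0" unfolding js0_def using ex_dec by (rule someI_ex)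
  have "lovasz_ext F w = w \<bullet> gv F js0"
    unfolding lovasz_ext_def js0_def[symmetric] Let_def
    by (rule lsum_gv[OF dec_perm[OF d0]])
  moreover have "gv F js \<bullet> w \<le> w \<bullet> gv F js0"
    by (rule abel_full[where F=F, OF F0 dec_perm[OF d0]]) (use d0 w0 gv_poly[OF sub F0 dec_perm[OF dec]] in \<open>auto simp: decreasing_order_def\<close>)
  moreover have "gv F js0 \<bullet> w \<le> w \<bullet> gv F js"
    by (rule abel_full[where F=F, OF F0 dec_perm[OF dec]]) (use dec w0 gv_poly[OF sub F0 dec_perm[OF d0]] in \<open>auto simp: decreasing_order_def\<close>)
  ultimately show ?thesis by (simp add: inner_commute)
qed

lemma lovasz_ge:
  fixes F :: "'p::finite set \<Rightarrow> real"
  assumes sub: "submodular F" and F0: "F {} = 0"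
    and pl: "perm_list ps" and w0: "\<And>i. 0 \<le> w $ i"
  shows "w \<bullet> gv F ps \<le> lovasz_ext F w"
proof -
  obtain js where dec: "decreasing_order w js" using ex_dec by blast
  have "gv F ps \<bullet> w \<le> w \<bullet> gv F js"
    by (rule abel_full[where F=F, OF F0 dec_perm[OF dec]]) (use dec w0 gv_poly[OF sub F0 pl] in \<open>auto simp: decreasing_order_def\<close>)
  then show ?thesis using lovasz_char[OF sub F0 dec w0] by (simp add: inner_commute)
qed




definition absv :: "real ^ 'p \<Rightarrow> real ^ 'p" where
  "absv w = (\<chi> i. \<bar>w $ i\<bar>)"

lemma absv_nth[simp]: "absv w $ i = \<bar>w $ i\<bar>" by (simp add: absv_def)

lemma Omega_absv: "Omega F w = lovasz_ext F (absv w)" by (simp add: Omega_def absv_def)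

lemma inner_sum: "(a::real^'p::finite) \<bullet> b = (\<Sum>i\<in>UNIV. a $ i * b $ i)"
  by (simp add: inner_vec_def)

context
  fixes F :: "'p::finite set \<Rightarrow> real"
  assumes sub: "submodular F" and mono: "nondecreasing_setfun F" and F0: "F {} = 0"
begin

lemma Omega_char: "decreasing_order (absv w) js \<Longrightarrow> Omega F w = (\<Sum>i\<in>UNIV. \<bar>w $ i\<bar> * gv F js $ i)"
  unfolding Omega_absv by (subst lovasz_char[OF sub F0]) (auto simp: inner_sum)

lemma Omega_ge: "perm_list ps \<Longrightarrow> (\<Sum>i\<in>UNIV. \<bar>w $ i\<bar> * gv F ps $ i) \<le> Omega F w"
  unfolding Omega_absv using lovasz_ge[OF sub F0, of ps "absv w"] by (auto simp: inner_sum)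

lemma gv_sum: "perm_list ps \<Longrightarrow> (\<Sum>i\<in>UNIV. gv F ps $ i) \<le> F UNIV"
  by (rule gv_poly[OF sub F0])

lemma Omega_comp: "F {k} * \<bar>w $ k\<bar> \<le> Omega F w"
proof -
  obtain xs :: "'p list" where xs: "set xs = UNIV" "distinct xs"
    using finite_distinct_list[OF finite_class.finite_UNIV] by blast
  define ps where "ps = k # filter (\<lambda>j. j \<noteq> k) xs"
  have pl: "perm_list ps" using xs by (auto simp: ps_def perm_list_def)
  have "pos ps k = 0" using pos_nth[of ps 0] pl by (simp add: ps_def perm_list_def)
  then have gk: "gv F ps $ k = F {k}" using F0 by (simp add: gv_def ps_def)
  have "F {k} * \<bar>w $ k\<bar> = \<bar>w $ k\<bar> * gv F ps $ k" using gk by simp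
  also have "\<dots> \<le> (\<Sum>i\<in>UNIV. \<bar>w $ i\<bar> * gv F ps $ i)"
    by (rule member_le_sum) (auto intro: mult_nonneg_nonneg gv_nonneg[OF mono])
  also have "\<dots> \<le> Omega F w" by (rule Omega_ge[OF pl])
  finally show ?thesis .
qed

lemma Omega_nonneg: "0 \<le> Omega F w"
proof -
  obtain js where "decreasing_order (absv w) js" using ex_dec by blast
  then show ?thesis by (simp add: Omega_char sum_nonneg gv_nonneg[OF mono])
qed

lemma Omega_zero: "Omega F 0 = 0"
proof -
  obtain js where "decreasing_order (absv (0::real^'p)) js" using ex_dec by blast
  then show ?thesis using Omega_char[of "0::real^'p" js] by simp
qed

lemma Omega_mid: "Omega F ((1/2) *\<^sub>R (a + b)) \<le> (Omega F a + Omega F b) / 2"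
proof -
  obtain js where dj: "decreasing_order (absv ((1/2) *\<^sub>R (a + b))) js" using ex_dec by blast
  have pl: "perm_list js" using dec_perm[OF dj] .
  have "Omega F ((1/2) *\<^sub>R (a + b)) = (\<Sum>i\<in>UNIV. \<bar>((1/2) *\<^sub>R (a + b)) $ i\<bar> * gv F js $ i)"
    by (rule Omega_char[OF dj])
  also have "\<dots> \<le> (\<Sum>i\<in>UNIV. ((\<bar>a $ i\<bar> * gv F js $ i) + (\<bar>b $ i\<bar> * gv F js $ i)) / 2)"
  proof (rule sum_mono)
    fix i
    have g: "0 \<le> gv F js $ i" by (rule gv_nonneg[OF mono])
    have "\<bar>((1/2) *\<^sub>R (a + b)) $ i\<bar> \<le> (\<bar>a $ i\<bar> + \<bar>b $ i\<bar>) / 2" by simp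
    then have "\<bar>((1/2) *\<^sub>R (a + b)) $ i\<bar> * gv F js $ i \<le> ((\<bar>a $ i\<bar> + \<bar>b $ i\<bar>) / 2) * gv F js $ i"
      using g by (rule mult_right_mono)
    then show "\<bar>((1/2) *\<^sub>R (a + b)) $ i\<bar> * gv F js $ i \<le> ((\<bar>a $ i\<bar> * gv F js $ i) + (\<bar>b $ i\<bar> * gv F js $ i)) / 2"
      by (simp add: algebra_simps)
  qed
  also have "\<dots> = ((\<Sum>i\<in>UNIV. \<bar>a $ i\<bar> * gv F js $ i) + (\<Sum>i\<in>UNIV. \<bar>b $ i\<bar> * gv F js $ i)) / 2"
    by (simp add: sum_divide_distrib[symmetric] sum.distrib[symmetric])
  also have "\<dots> \<le> (Omega F a + Omega F b) / 2"
    using Omega_ge[OF pl, of a] Omega_ge[OF pl, of b] by simp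
  finally show ?thesis .
qed

lemma Omega_lip1: "Omega F w - Omega F v \<le> F UNIV * norm (w - v)"
proof -
  obtain js where dj: "decreasing_order (absv w) js" using ex_dec by blast
  have pl: "perm_list js" using dec_perm[OF dj] .
  have "Omega F w - Omega F v \<le> (\<Sum>i\<in>UNIV. \<bar>w $ i\<bar> * gv F js $ i) - (\<Sum>i\<in>UNIV. \<bar>v $ i\<bar> * gv F js $ i)"
    using Omega_char[OF dj] Omega_ge[OF pl, of v] by simp
  also have "\<dots> = (\<Sum>i\<in>UNIV. (\<bar>w $ i\<bar> - \<bar>v $ i\<bar>) * gv F js $ i)"
    by (simp add: sum_subtractf algebra_simps)
  also have "\<dots> \<le> (\<Sum>i\<in>UNIV. norm (w - v) * gv F js $ i)"
  proof (rule sum_mono)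
    fix i
    have g: "0 \<le> gv F js $ i" by (rule gv_nonneg[OF mono])
    have "\<bar>w $ i\<bar> - \<bar>v $ i\<bar> \<le> \<bar>(w - v) $ i\<bar>" by simp
    also have "\<dots> \<le> norm (w - v)" by (rule component_le_norm_cart)
    finally show "(\<bar>w $ i\<bar> - \<bar>v $ i\<bar>) * gv F js $ i \<le> norm (w - v) * gv F js $ i"
      using g by (rule mult_right_mono)
  qed
  also have "\<dots> = norm (w - v) * (\<Sum>i\<in>UNIV. gv F js $ i)" by (simp add: sum_distrib_left)
  also have "\<dots> \<le> norm (w - v) * F UNIV"
    by (rule mult_left_mono[OF gv_sum[OF pl]]) simp
  finally show ?thesis by (simp add: mult.commute)
qed

lemma Omega_cont: "continuous_on A (Omega F)"
proof -
  have FU: "0 \<le> F UNIV" using mono F0 unfolding nondecreasing_setfun_def by (metis empty_subsetI)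
  have "(F UNIV)-lipschitz_on A (Omega F)"
  proof (rule lipschitz_onI)
    fix x y assume "x \<in> A" "y \<in> A"
    show "dist (Omega F x) (Omega F y) \<le> F UNIV * dist x y"
      using Omega_lip1[of x y] Omega_lip1[of y x]
      by (simp add: dist_real_def dist_norm norm_minus_commute abs_le_iff)
  qed (rule FU)
  then show ?thesis by (rule lipschitz_on_continuous_on)
qed

end



lemma X_inj:
  fixes X :: "real ^ 'p::finite ^ 'n::finite"
  assumes inv: "invertible (transpose X ** X)" and z: "X *v v = 0"
  shows "v = 0"
proof -
  obtain B where B: "B ** (transpose X ** X) = mat 1"
    using inv unfolding invertible_def by blast
  have "v = (B ** (transpose X ** X)) *v v" by (simp add: B)
  also have "\<dots> = B *v (transpose X *v (X *v v))" by (simp add: matrix_vector_mul_assoc)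
  also have "\<dots> = 0" by (simp add: z)
  finally show ?thesis .
qed

lemma cont_Xv: "continuous_on A (\<lambda>w. (X::real^'p::finite^'n::finite) *v w)"
  using matrix_vector_mul_linear[of X] linear_conv_bounded_linear linear_continuous_on by blast

context
  fixes F :: "'p::finite set \<Rightarrow> real" and X :: "real ^ 'p ^ 'n::finite" and lam :: real
  assumes sub: "submodular F" and mono: "nondecreasing_setfun F" and F0: "F {} = 0"
    and Fk: "\<And>k. F {k} > 0" and inv: "invertible (transpose X ** X)" and lam: "lam > 0"
begin

lemma obj_cont: "continuous_on A (objective F X lam y)"
  unfolding objective_def
  by (intro continuous_intros cont_Xv Omega_cont[OF sub mono F0])

lemma Omega_coerc: "\<exists>mF>0. \<forall>w. mF * norm w \<le> real CARD('p) * Omega F w"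
proof -
  define mF where "mF = Min (range (\<lambda>k::'p. F {k}))"
  have "mF \<in> range (\<lambda>k::'p. F {k})" unfolding mF_def by (rule Min_in) auto
  then have mpos: "mF > 0" using Fk by auto
  have mle: "mF \<le> F {k}" for k unfolding mF_def by (rule Min_le) auto
  have "mF * norm w \<le> real CARD('p) * Omega F w" for w
  proof -
    have "mF * norm w \<le> mF * (\<Sum>i\<in>UNIV. \<bar>w $ i\<bar>)"
      using norm_le_l1_cart mpos by (simp add: mult_left_mono)
    also have "\<dots> = (\<Sum>i\<in>UNIV. mF * \<bar>w $ i\<bar>)" by (simp add: sum_distrib_left)
    also have "\<dots> \<le> (\<Sum>i\<in>(UNIV::'p set). Omega F w)"
    proof (rule sum_mono)
      fix i
      have "mF * \<bar>w $ i\<bar> \<le> F {i} * \<bar>w $ i\<bar>" using mle[of i] by (simp add: mult_right_mono)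
      also have "\<dots> \<le> Omega F w" by (rule Omega_comp[OF sub mono F0])
      finally show "mF * \<bar>w $ i\<bar> \<le> Omega F w" .
    qed
    also have "\<dots> = real CARD('p) * Omega F w" by simp
    finally show ?thesis .
  qed
  then show ?thesis using mpos by blast
qed

lemma minimizer_exists: "\<exists>w. is_minimizer F X lam y w"
proof -
  obtain mF where mF: "mF > 0" "\<And>w. mF * norm w \<le> real CARD('p) * Omega F w"
    using Omega_coerc by blast
  let ?f = "objective F X lam y"
  define R where "R = real CARD('p) * ?f 0 / (lam * mF)"
  have f0: "0 \<le> ?f 0" unfolding objective_def using Omega_nonneg[OF sub mono F0] lam
    by (intro add_nonneg_nonneg mult_nonneg_nonneg) auto
  have R0: "0 \<le> R" unfolding R_def using f0 lam mF by simp
  obtain x where x: "x \<in> cball 0 R" "\<forall>v\<in>cball 0 R. ?f x \<le> ?f v"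
    using continuous_attains_inf[OF compact_cball, of 0 R ?f] obj_cont R0 by auto
  have "?f x \<le> ?f v" for v
  proof (cases "v \<in> cball 0 R")
    case True then show ?thesis using x by blast
  next
    case False
    then have nv: "norm v > R" by (simp add: dist_norm)
    have "lam * mF * R < lam * mF * norm v" using nv lam mF by simp
    also have "lam * mF * norm v \<le> lam * (real CARD('p) * Omega F v)"
      using mF(2)[of v] lam by (simp add: mult.assoc mult_left_mono)
    finally have "real CARD('p) * ?f 0 < real CARD('p) * (lam * Omega F v)"
      unfolding R_def using lam mF by (simp add: field_simps)
    then have "?f 0 < lam * Omega F v" by simp
    also have "\<dots> \<le> ?f v" unfolding objective_def by simp
    finally have "?f 0 < ?f v" .
    moreover have "?f x \<le> ?f 0" using x R0 by simp
    ultimately show ?thesis by simp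
  qed
  then show ?thesis unfolding is_minimizer_def by blast
qed

lemma minimizer_unique:
  assumes m1: "is_minimizer F X lam y w1" and m2: "is_minimizer F X lam y w2"
  shows "w1 = w2"
proof (rule ccontr)
  assume ne: "w1 \<noteq> w2"
  let ?f = "objective F X lam y"
  define c where "c = 1 / (2 * real CARD('n))"
  have c0: "c > 0" by (simp add: c_def)
  define m where "m = (1/2) *\<^sub>R (w1 + w2)"
  define a where "a = y - X *v w1"
  define b where "b = y - X *v w2"
  have ym: "y - X *v m = (1/2) *\<^sub>R (a + b)"
    by (simp add: vec_eq_iff m_def a_def b_def matrix_vector_mult_scaleR matrix_vector_right_distrib algebra_simps)
  have ab: "a - b = X *v (w2 - w1)" by (simp add: a_def b_def matrix_vector_right_distrib algebra_simps)
  have abn: "a - b \<noteq> 0" using X_inj[OF inv, of "w2 - w1"] ne ab by auto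
  have par: "(norm ((1/2) *\<^sub>R (a + b)))\<^sup>2 = ((norm a)\<^sup>2 + (norm b)\<^sup>2) / 2 - (norm (a - b))\<^sup>2 / 4"
    by (simp add: power2_norm_eq_inner inner_add inner_diff algebra_simps inner_commute; simp add: field_simps)
  have pos: "(norm (a - b))\<^sup>2 > 0" using abn by simp
  have "?f m = c * (norm (y - X *v m))\<^sup>2 + lam * Omega F m" by (simp add: objective_def c_def)
  also have "\<dots> \<le> c * (((norm a)\<^sup>2 + (norm b)\<^sup>2) / 2 - (norm (a - b))\<^sup>2 / 4) + lam * ((Omega F w1 + Omega F w2) / 2)"
  proof -
    have e1: "(norm (y - X *v m))\<^sup>2 = ((norm a)\<^sup>2 + (norm b)\<^sup>2) / 2 - (norm (a - b))\<^sup>2 / 4"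
      using ym par by simp
    have e2: "Omega F m \<le> (Omega F w1 + Omega F w2) / 2"
      using Omega_mid[OF sub mono F0, of w1 w2] unfolding m_def .
    show ?thesis using e1 mult_left_mono[OF e2, of lam] lam by simp
  qed
  also have "\<dots> = (?f w1 + ?f w2) / 2 - c * (norm (a - b))\<^sup>2 / 4"
    by (simp add: objective_def c_def a_def b_def add_divide_distrib diff_divide_distrib right_diff_distrib distrib_left)
  also have "\<dots> < ?f w1"
  proof -
    have "?f w1 \<le> ?f w2" "?f w2 \<le> ?f w1" using m1 m2 unfolding is_minimizer_def by blast+
    moreover have "c * (norm (a - b))\<^sup>2 > 0" using c0 pos by simp
    ultimately show ?thesis by (simp add: field_simps)
  qed
  finally show False using m1 unfolding is_minimizer_def by (meson not_le)
qed

lemma ex1_minimizer: "\<exists>!w. is_minimizer F X lam y w"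
  using minimizer_exists minimizer_unique by blast

end



definition sg :: "'p set \<Rightarrow> 'p \<Rightarrow> real" where
  "sg P i = (if i \<in> P then 1 else -1)"

definition Lsp :: "'p::finite set \<Rightarrow> 'p set \<Rightarrow> ('p \<times> 'p) set \<Rightarrow> (real ^ 'p) set" where
  "Lsp J P E = {v. (\<forall>i. i \<notin> J \<longrightarrow> v $ i = 0) \<and>
     (\<forall>i\<in>J. \<forall>j\<in>J. (i, j) \<in> E \<longrightarrow> sg P i * v $ i = sg P j * v $ j)}"

definition Adm :: "real ^ 'p ^ 'n \<Rightarrow> 'p::finite set \<Rightarrow> 'p set \<Rightarrow> ('p \<times> 'p) set \<Rightarrow> 'p \<Rightarrow> real ^ 'p \<Rightarrow> bool" where
  "Adm X J P E k z \<longleftrightarrow> z $ k = 1 \<and> (\<forall>i. i \<notin> J \<longrightarrow> i \<noteq> k \<longrightarrow> z $ i = 0) \<and>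
     (\<forall>i\<in>J. \<forall>j\<in>J. (i, j) \<in> E \<longrightarrow> sg P i * z $ i = sg P j * z $ j) \<and>
     (\<forall>w\<in>Lsp J P E. (X *v z) \<bullet> (X *v w) = 0)"

definition zz :: "real ^ 'p ^ 'n \<Rightarrow> 'p::finite set \<Rightarrow> 'p set \<Rightarrow> ('p \<times> 'p) set \<Rightarrow> 'p \<Rightarrow> real ^ 'p" where
  "zz X J P E k = (SOME z. Adm X J P E k z)"

lemma Lsp_subspace: "subspace (Lsp J P E)"
  unfolding subspace_def Lsp_def by (auto simp: algebra_simps)

lemma zz_ex:
  fixes X :: "real ^ 'p::finite ^ 'n::finite"
  assumes kJ: "k \<notin> J"
  shows "\<exists>z. Adm X J P E k z"
proof -
  let ?L = "Lsp J P E"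
  let ?f = "\<lambda>w. X *v w"
  have lin: "linear ?f" by (rule matrix_vector_mul_linear)
  obtain y' r where yr: "y' \<in> span (?f ` ?L)" "\<And>w. w \<in> span (?f ` ?L) \<Longrightarrow> orthogonal r w"
    "X *v axis k 1 = y' + r"
    using orthogonal_subspace_decomp_exists[of "(\<lambda>w. X *v w) ` Lsp J P E" "X *v axis k 1"] by metis
  have "span (?f ` ?L) = ?f ` span ?L" by (rule span_linear_image[OF lin])
  also have "span ?L = ?L" using Lsp_subspace by (simp add: span_eq_iff)
  finally have sp: "span (?f ` ?L) = ?f ` ?L" .
  obtain l where l: "l \<in> ?L" "y' = X *v l" using yr(1) sp by auto
  define z where "z = axis k 1 - l"
  have lk: "l $ k = 0" using l(1) kJ by (simp add: Lsp_def)
  have Xz: "X *v z = r" using yr(3) l(2) by (simp add: z_def matrix_vector_mult_diff_distrib)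
  have "Adm X J P E k z"
    unfolding Adm_def
  proof (intro conjI ballI allI impI)
    show "z $ k = 1" using lk by (simp add: z_def)
  next
    fix i assume "i \<notin> J" "i \<noteq> k"
    then show "z $ i = 0" using l(1) by (simp add: z_def Lsp_def axis_def)
  next
    fix i j assume ij: "i \<in> J" "j \<in> J" "(i, j) \<in> E"
    then have "i \<noteq> k" "j \<noteq> k" using kJ by auto
    moreover have "sg P i * l $ i = sg P j * l $ j" using l(1) ij by (simp add: Lsp_def)
    ultimately show "sg P i * z $ i = sg P j * z $ j" by (simp add: z_def axis_def algebra_simps)
  next
    fix w assume "w \<in> ?L"
    then have "X *v w \<in> span (?f ` ?L)" by (intro span_base) auto
    then show "(X *v z) \<bullet> (X *v w) = 0" using yr(2) Xz by (simp add: orthogonal_def)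
  qed
  then show ?thesis by blast
qed

lemma zz_adm: "k \<notin> J \<Longrightarrow> Adm X J P E k (zz X J P E k)"
  unfolding zz_def using zz_ex by (rule someI_ex)

definition hv :: "('p::finite set \<Rightarrow> real) \<Rightarrow> 'p set \<Rightarrow> 'p set \<Rightarrow> 'p list \<Rightarrow> real ^ 'p" where
  "hv F J P js = (\<chi> i. (if i \<in> J then sg P i else 0) * gv F js $ i)"

definition Hyp :: "('p::finite set \<Rightarrow> real) \<Rightarrow> real ^ 'p ^ 'n::finite \<Rightarrow> real \<Rightarrow> 'p set \<Rightarrow> 'p set \<Rightarrow> ('p \<times> 'p) set \<Rightarrow> 'p \<Rightarrow> 'p list \<Rightarrow> (real ^ 'n) set" where
  "Hyp F X lam J P E k js = {y. X *v zz X J P E k \<noteq> 0 \<and>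
      (X *v zz X J P E k) \<bullet> y = real CARD('n) * lam * (hv F J P js \<bullet> zz X J P E k)}"

definition NN :: "('p::finite set \<Rightarrow> real) \<Rightarrow> real ^ 'p ^ 'n::finite \<Rightarrow> real \<Rightarrow> (real ^ 'n) set" where
  "NN F X lam = (\<Union>J. \<Union>P. \<Union>E. \<Union>k. \<Union>js\<in>{js. perm_list js}. Hyp F X lam J P E k js)"

lemma Hyp_null:
  fixes X :: "real ^ 'p::finite ^ 'n::finite"
  shows "Hyp F X lam J P E k js \<in> null_sets lborel"
proof (cases "X *v zz X J P E k = 0")
  case True
  then show ?thesis by (simp add: Hyp_def)
next
  case False
  define a where "a = X *v zz X J P E k"
  define b where "b = real CARD('n) * lam * (hv F J P js \<bullet> zz X J P E k)"
  have e: "Hyp F X lam J P E k js = {y. a \<bullet> y = b}" using False by (simp add: Hyp_def a_def b_def)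
  have "negligible {y. a \<bullet> y = b}" using False by (intro negligible_hyperplane) (simp add: a_def)
  then have "{y. a \<bullet> y = b} \<in> null_sets lebesgue" by (simp add: negligible_iff_null_sets)
  moreover have "{y. a \<bullet> y = b} \<in> sets lborel"
    unfolding sets_lborel by (rule borel_closed) (rule closed_hyperplane)
  ultimately show ?thesis using e null_sets_completion_iff by metis
qed

lemma finite_perm_lists: "finite {js :: 'p::finite list. perm_list js}"
proof -
  have "{js :: 'p list. perm_list js} \<subseteq> {xs. set xs \<subseteq> UNIV \<and> distinct xs}"
    by (auto simp: perm_list_def)
  then show ?thesis using finite_subset finite_subset_distinct[OF finite_class.finite_UNIV] by blast
qed

lemma NN_null:
  fixes X :: "real ^ 'p::finite ^ 'n::finite"
  shows "NN F X lam \<in> null_sets lborel"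
  unfolding NN_def
  by (intro null_sets.finite_UN finite_class.finite_UNIV finite_perm_lists Hyp_null)




lemma nonstable_k:
  assumes mono: "nondecreasing_setfun F" and ns: "\<not> stable_set F J"
  shows "\<exists>k. k \<notin> J \<and> F (insert k J) = F J"
proof -
  obtain B where B: "J \<subset> B" "\<not> F B > F J" using ns unfolding stable_set_def by blast
  then obtain k where k: "k \<in> B" "k \<notin> J" by blast
  have "F J \<le> F (insert k J)" "F (insert k J) \<le> F B"
    using mono B(1) k(1) unfolding nondecreasing_setfun_def by (meson subset_insertI, meson insert_subsetI psubsetE)
  then show ?thesis using B(2) k(2) by (intro exI[of _ k]) auto
qed

lemma in_set_take_iff: "x \<in> set (take n xs) \<longleftrightarrow> (\<exists>a<n. a < length xs \<and> xs ! a = x)"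
  by (auto simp: in_set_conv_nth)

lemma order_ex:
  fixes w :: "real ^ 'p::finite"
  assumes kJ: "k \<notin> Supp w"
  shows "\<exists>js. decreasing_order (absv w) js \<and> set (take (pos js k) js) = Supp w"
proof -
  let ?J = "Supp w"
  obtain xs :: "'p list" where xs: "set xs = UNIV" "distinct xs"
    using finite_distinct_list[OF finite_class.finite_UNIV] by blast
  define f where "f i = (if i \<in> ?J then - \<bar>w $ i\<bar> else if i = k then 0 else (1::real))" for i
  define js where "js = sort_key f xs"
  have d: "distinct js" and st: "set js = UNIV" by (simp_all add: js_def xs)
  have srt: "sorted (map f js)" by (simp add: js_def)
  have mono: "f (js ! a) \<le> f (js ! b)" if "a \<le> b" "b < length js" for a b
    using srt that by (simp add: sorted_iff_nth_mono)
  have Jpos: "i \<in> ?J \<Longrightarrow> \<bar>w $ i\<bar> > 0" for i by (simp add: Supp_def)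
  have Jn: "i \<notin> ?J \<Longrightarrow> w $ i = 0" for i by (simp add: Supp_def)
  have dec: "sorted_wrt (\<lambda>i j. absv w $ j \<le> absv w $ i) js"
    unfolding sorted_wrt_iff_nth_less
  proof (intro allI impI)
    fix a b assume ab: "a < b" "b < length js"
    have le: "f (js ! a) \<le> f (js ! b)" using mono ab by simp
    show "absv w $ (js ! b) \<le> absv w $ (js ! a)"
    proof (cases "js ! b \<in> ?J")
      case False then show ?thesis using Jn by simp
    next
      case True
      then have "f (js ! b) < 0" using Jpos by (simp add: f_def)
      then have "js ! a \<in> ?J" using le by (auto simp: f_def split: if_splits)
      then show ?thesis using le True by (simp add: f_def)
    qed
  qed
  have pk: "pos js k < length js" "js ! pos js k = k" using pos_in[OF d] st by auto
  have pre: "set (take (pos js k) js) = ?J"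
  proof
    show "set (take (pos js k) js) \<subseteq> ?J"
    proof
      fix x assume "x \<in> set (take (pos js k) js)"
      then obtain a where a: "a < pos js k" "js ! a = x" by (auto simp: in_set_take_iff)
      have "x \<noteq> k" using a pk d by (metis nth_eq_iff_index_eq order.strict_trans less_irrefl)
      moreover have "f x \<le> f k" using mono[of a "pos js k"] a pk by simp
      ultimately show "x \<in> ?J" by (auto simp: f_def split: if_splits)
    qed
  next
    show "?J \<subseteq> set (take (pos js k) js)"
    proof
      fix x assume xJ: "x \<in> ?J"
      have px: "pos js x < length js" "js ! pos js x = x" using pos_in[OF d] st by auto
      have "x \<noteq> k" using xJ kJ by auto
      then have ne: "pos js x \<noteq> pos js k" using px pk by metis
      have "pos js x < pos js k"
      proof (rule ccontr)
        assume "\<not> pos js x < pos js k"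
        then have "f k \<le> f x" using mono[of "pos js k" "pos js x"] px pk ne by simp
        then show False using xJ kJ Jpos[OF xJ] by (simp add: f_def)
      qed
      then show "x \<in> set (take (pos js k) js)" using px by (auto simp: in_set_take_iff)
    qed
  qed
  show ?thesis using d st dec pre unfolding decreasing_order_def by blast
qed




context
  fixes F :: "'p::finite set \<Rightarrow> real" and X :: "real ^ 'p ^ 'n::finite" and lam :: real
  assumes sub: "submodular F" and mono: "nondecreasing_setfun F" and F0: "F {} = 0"
    and Fk: "\<And>k. F {k} > 0" and inv: "invertible (transpose X ** X)" and lam: "lam > 0"
begin

lemma key:
  assumes mw: "is_minimizer F X lam y w" and ns: "\<not> stable_set F (Supp w)"
  shows "y \<in> NN F X lam"
proof -
  define J where "J = Supp w"
  obtain k where k: "k \<notin> J" "F (insert k J) = F J"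
    using nonstable_k[OF mono ns] unfolding J_def by blast
  obtain js where js: "decreasing_order (absv w) js" "set (take (pos js k) js) = J"
    using order_ex[of k w] k(1) unfolding J_def by blast
  have pl: "perm_list js" using dec_perm[OF js(1)] .
  have d: "distinct js" and st: "set js = UNIV" using pl by (auto simp: perm_list_def)
  have srt: "sorted_wrt (\<lambda>i j. absv w $ j \<le> absv w $ i) js"
    using js(1) by (simp add: decreasing_order_def)
  define P where "P = {i. w $ i > 0}"
  define E where "E = {(i, j). \<bar>w $ i\<bar> = \<bar>w $ j\<bar>}"
  define z where "z = zz X J P E k"
  have adm: "Adm X J P E k z" unfolding z_def by (rule zz_adm[OF k(1)])
  define h where "h = hv F J P js"
  have Jn: "i \<notin> J \<Longrightarrow> w $ i = 0" for i by (simp add: J_def Supp_def)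
  have Jnz: "i \<in> J \<Longrightarrow> w $ i \<noteq> 0" for i by (simp add: J_def Supp_def)
  have sgw: "i \<in> J \<Longrightarrow> sg P i * w $ i = \<bar>w $ i\<bar>" for i
    using Jnz[of i] by (auto simp: sg_def P_def)
  have wL: "w \<in> Lsp J P E" unfolding Lsp_def using Jn sgw by (auto simp: E_def)
  have zk: "z $ k = 1" and zo: "\<And>i. i \<notin> J \<Longrightarrow> i \<noteq> k \<Longrightarrow> z $ i = 0"
    and zt: "\<And>i j. i \<in> J \<Longrightarrow> j \<in> J \<Longrightarrow> (i, j) \<in> E \<Longrightarrow> sg P i * z $ i = sg P j * z $ j"
    and zorth: "\<And>v. v \<in> Lsp J P E \<Longrightarrow> (X *v z) \<bullet> (X *v v) = 0"
    using adm unfolding Adm_def by auto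
  have pk: "pos js k < length js" "js ! pos js k = k" using pos_in[OF d] st by auto
  have gk: "gv F js $ k = 0"
  proof -
    have "set (take (Suc (pos js k)) js) = insert k J"
      using pk js(2) by (simp add: take_Suc_conv_app_nth)
    then show ?thesis using k(2) js(2) by (simp add: gv_def)
  qed
  define wt where "wt t = w + t *\<^sub>R z" for t :: real
  have wti: "wt t $ i = w $ i + t * z $ i" for t i by (simp add: wt_def)
  have tend: "((\<lambda>t. wt t $ i) \<longlongrightarrow> w $ i) (nhds 0)" for i
  proof -
    have "((\<lambda>t. w $ i + t * z $ i) \<longlongrightarrow> w $ i + 0 * z $ i) (nhds 0)"
      by (intro tendsto_intros filterlim_ident)
    then show ?thesis by (simp add: wti)
  qed
  have S1: "eventually (\<lambda>t. \<bar>wt t $ i\<bar> = sg P i * wt t $ i) (nhds 0)" if iJ: "i \<in> J" for i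
  proof (cases "w $ i > 0")
    case True
    have "eventually (\<lambda>t. 0 < wt t $ i) (nhds 0)" using order_tendstoD(1)[OF tend True] .
    then show ?thesis by eventually_elim (use True in \<open>auto simp: sg_def P_def\<close>)
  next
    case False
    then have "w $ i < 0" using Jnz[OF iJ] by simp
    then have "eventually (\<lambda>t. wt t $ i < 0) (nhds 0)" using order_tendstoD(2)[OF tend] by blast
    then show ?thesis by eventually_elim (use False in \<open>auto simp: sg_def P_def\<close>)
  qed
  have S: "eventually (\<lambda>t. \<forall>i\<in>J. \<bar>wt t $ i\<bar> = sg P i * wt t $ i) (nhds 0)"
    by (rule eventually_ball_finite) (auto intro: S1)
  have O1: "eventually (\<lambda>t. pos js i < pos js j \<longrightarrow> \<bar>wt t $ j\<bar> \<le> \<bar>wt t $ i\<bar>) (nhds 0)" for i j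
  proof (cases "pos js i < pos js j")
    case False then show ?thesis by simp
  next
    case True
    have pi: "pos js i < length js" "js ! pos js i = i" using pos_in[OF d] st by auto
    have pj: "pos js j < length js" "js ! pos js j = j" using pos_in[OF d] st by auto
    have wij: "\<bar>w $ j\<bar> \<le> \<bar>w $ i\<bar>"
      using srt True pj pi unfolding sorted_wrt_iff_nth_less by (metis absv_nth)
    show ?thesis
    proof (cases "j \<notin> J \<and> j \<noteq> k")
      case True
      then have "wt t $ j = 0" for t using Jn zo by (simp add: wti)
      then show ?thesis by simp
    next
      case jJk: False
      show ?thesis
      proof (cases "\<bar>w $ j\<bar> < \<bar>w $ i\<bar>")
        case True
        have "((\<lambda>t. \<bar>wt t $ i\<bar> - \<bar>wt t $ j\<bar>) \<longlongrightarrow> \<bar>w $ i\<bar> - \<bar>w $ j\<bar>) (nhds 0)"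
          by (intro tendsto_intros tend)
        then have "eventually (\<lambda>t. 0 < \<bar>wt t $ i\<bar> - \<bar>wt t $ j\<bar>) (nhds 0)"
          using True by (intro order_tendstoD(1)) auto
        then show ?thesis by eventually_elim simp
      next
        case False
        then have eq: "\<bar>w $ j\<bar> = \<bar>w $ i\<bar>" using wij by simp
        have "i \<in> set (take (pos js k) js)" if "j = k"
          using True pi that by (auto simp: in_set_take_iff)
        then have jJ: "j \<in> J"
        proof (cases "j = k")
          case True
          then have "i \<in> J" using \<open>j = k \<Longrightarrow> i \<in> set (take (pos js k) js)\<close> js(2) by simp
          then show ?thesis using eq Jnz Jn True k(1) by (metis abs_eq_0)
        next
          case False then show ?thesis using jJk by simp
        qed
        then have iJ: "i \<in> J" using eq Jnz Jn by (metis abs_eq_0)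
        have ijE: "(i, j) \<in> E" using eq by (simp add: E_def)
        have tz: "sg P i * z $ i = sg P j * z $ j" using zt[OF iJ jJ ijE] .
        from S show ?thesis
        proof eventually_elim
          case (elim t)
          have "\<bar>wt t $ j\<bar> = sg P j * w $ j + t * (sg P j * z $ j)"
            using elim jJ by (simp add: wti algebra_simps)
          also have "\<dots> = sg P i * w $ i + t * (sg P i * z $ i)"
            using sgw[OF iJ] sgw[OF jJ] eq tz by simp
          also have "\<dots> = \<bar>wt t $ i\<bar>" using elim iJ by (simp add: wti algebra_simps)
          finally show ?case by simp
        qed
      qed
    qed
  qed
  have O: "eventually (\<lambda>t. \<forall>i j. pos js i < pos js j \<longrightarrow> \<bar>wt t $ j\<bar> \<le> \<bar>wt t $ i\<bar>) (nhds 0)"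
    by (intro eventually_all_finite O1)
  have EQ: "eventually (\<lambda>t. Omega F (wt t) = h \<bullet> wt t) (nhds 0)"
    using S O
  proof eventually_elim
    case (elim t)
    have "decreasing_order (absv (wt t)) js"
      unfolding decreasing_order_def sorted_wrt_iff_nth_less
    proof (intro conjI d st allI impI)
      fix a b assume ab: "a < b" "b < length js"
      then show "absv (wt t) $ (js ! b) \<le> absv (wt t) $ (js ! a)"
        using elim(2) pos_nth[OF d, of a] pos_nth[OF d, of b] by auto
    qed
    then have "Omega F (wt t) = (\<Sum>i\<in>UNIV. \<bar>wt t $ i\<bar> * gv F js $ i)"
      by (rule Omega_char[OF sub mono F0])
    also have "\<dots> = (\<Sum>i\<in>UNIV. h $ i * wt t $ i)"
    proof (rule sum.cong)
      fix i
      show "\<bar>wt t $ i\<bar> * gv F js $ i = h $ i * wt t $ i"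
      proof (cases "i \<in> J")
        case True then show ?thesis using elim(1) by (simp add: h_def hv_def)
      next
        case False
        show ?thesis
        proof (cases "i = k")
          case True then show ?thesis using gk False by (simp add: h_def hv_def)
        next
          case False
          then show ?thesis using \<open>i \<notin> J\<close> Jn zo by (simp add: wti h_def hv_def)
        qed
      qed
    qed simp
    also have "\<dots> = h \<bullet> wt t" by (simp add: inner_sum)
    finally show ?case .
  qed
  obtain dd where dd: "dd > 0" "\<And>t. dist t 0 < dd \<Longrightarrow> Omega F (wt t) = h \<bullet> wt t"
    using EQ unfolding eventually_nhds_metric by blast
  have wt0: "wt 0 = w" by (simp add: wt_def)
  have Om0: "Omega F w = h \<bullet> w" using dd(2)[of 0] dd(1) wt0 by simp
  define r where "r = y - X *v w"
  define u where "u = X *v z"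
  define c where "c = 1 / (2 * real CARD('n))"
  define A where "A = lam * (h \<bullet> z) - 2 * c * (r \<bullet> u)"
  define B where "B = c * (norm u)\<^sup>2"
  have yt: "y - X *v wt t = r - t *\<^sub>R u" for t
    by (simp add: wt_def r_def u_def matrix_vector_right_distrib matrix_vector_mult_scaleR)
  have nr: "(norm (r - t *\<^sub>R u))\<^sup>2 = (norm r)\<^sup>2 - 2 * t * (r \<bullet> u) + t\<^sup>2 * (norm u)\<^sup>2" for t
    by (simp only: power2_norm_eq_inner) (simp add: inner_diff inner_commute algebra_simps power2_eq_square)
  have loc: "\<forall>t. \<bar>0 - t\<bar> < dd \<longrightarrow> (\<lambda>t. t * A + t\<^sup>2 * B) 0 \<le> (\<lambda>t. t * A + t\<^sup>2 * B) t"
  proof (intro allI impI)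
    fix t :: real assume "\<bar>0 - t\<bar> < dd"
    then have Ot: "Omega F (wt t) = h \<bullet> wt t" using dd(2) by (simp add: dist_real_def)
    have "objective F X lam y w \<le> objective F X lam y (wt t)"
      using mw unfolding is_minimizer_def by blast
    moreover have "objective F X lam y w = c * (norm r)\<^sup>2 + lam * (h \<bullet> w)"
      using Om0 by (simp add: objective_def c_def r_def)
    moreover have "objective F X lam y (wt t) = c * ((norm r)\<^sup>2 - 2 * t * (r \<bullet> u) + t\<^sup>2 * (norm u)\<^sup>2) + lam * (h \<bullet> w + t * (h \<bullet> z))"
    proof -
      have "objective F X lam y (wt t) = c * (norm (y - X *v wt t))\<^sup>2 + lam * Omega F (wt t)"
        by (simp add: objective_def c_def)
      also have "\<dots> = c * (norm (r - t *\<^sub>R u))\<^sup>2 + lam * (h \<bullet> wt t)" by (simp only: yt Ot)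
      also have "h \<bullet> wt t = h \<bullet> w + t * (h \<bullet> z)" by (simp add: wt_def inner_add_right)
      finally show ?thesis by (simp only: nr)
    qed
    ultimately show "(\<lambda>t. t * A + t\<^sup>2 * B) 0 \<le> (\<lambda>t. t * A + t\<^sup>2 * B) t"
      by (simp add: A_def B_def algebra_simps)
  qed
  have der: "((\<lambda>t. t * A + t\<^sup>2 * B) has_real_derivative A) (at 0)"
    by (auto intro!: derivative_eq_intros)
  have A0: "A = 0" using DERIV_local_min[OF der dd(1) loc] .
  have Xwu: "(X *v w) \<bullet> u = 0" using zorth[OF wL] by (simp add: u_def inner_commute)
  have ru: "r \<bullet> u = u \<bullet> y" using Xwu by (simp add: r_def inner_diff_left inner_diff_right inner_commute)
  have "u \<bullet> y = real CARD('n) * lam * (h \<bullet> z)"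
    using A0 ru by (simp add: A_def c_def field_simps)
  moreover have "u \<noteq> 0"
  proof
    assume "u = 0"
    then have "z = 0" using X_inj[OF inv] by (simp add: u_def)
    then show False using zk by simp
  qed
  ultimately have "y \<in> Hyp F X lam J P E k js"
    by (simp add: Hyp_def u_def z_def h_def)
  then show ?thesis unfolding NN_def using pl by blast
qed

end


theorem proposition5:
  fixes F :: "'p::finite set \<Rightarrow> real"
    and X :: "real ^ 'p ^ 'n::finite"
    and lam :: real
    and M :: "'s measure"
    and Y :: "'s \<Rightarrow> real ^ 'n"
  assumes "submodular F"
    and "nondecreasing_setfun F"
    and "F {} = 0"
    and "\<And>k. F {k} > 0"
    and "invertible (transpose X ** X)"
    and "lam > 0"
    and "prob_space M"
    and "Y \<in> borel_measurable M"
    and "absolutely_continuous lborel (distr M borel Y)"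
  shows "(\<forall>y. \<exists>!w. is_minimizer F X lam y w) \<and>
         (AE \<omega> in M. stable_set F (Supp (THE w. is_minimizer F X lam (Y \<omega>) w)))"
proof -
  have ex1: "\<exists>!w. is_minimizer F X lam y w" for y
    by (rule ex1_minimizer[OF assms(1-6)])
  have "NN F X lam \<in> null_sets lborel" by (rule NN_null)
  then have "NN F X lam \<in> null_sets (distr M borel Y)"
    using assms(9) unfolding absolutely_continuous_def by blast
  then have nul: "Y -` NN F X lam \<inter> space M \<in> null_sets M"
    using null_sets_distr_iff[OF assms(8)] by blast
  have "AE \<omega> in M. stable_set F (Supp (THE w. is_minimizer F X lam (Y \<omega>) w))"
  proof (rule AE_I'[OF nul])
    show "{\<omega> \<in> space M. \<not> stable_set F (Supp (THE w. is_minimizer F X lam (Y \<omega>) w))}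
          \<subseteq> Y -` NN F X lam \<inter> space M"
    proof
      fix \<omega> assume "\<omega> \<in> {\<omega> \<in> space M. \<not> stable_set F (Supp (THE w. is_minimizer F X lam (Y \<omega>) w))}"
      then have \<omega>: "\<omega> \<in> space M" and ns: "\<not> stable_set F (Supp (THE w. is_minimizer F X lam (Y \<omega>) w))"
        by auto
      have "is_minimizer F X lam (Y \<omega>) (THE w. is_minimizer F X lam (Y \<omega>) w)"
        by (rule theI'[OF ex1])
      then have "Y \<omega> \<in> NN F X lam" by (rule key[OF assms(1-6) _ ns])
      then show "\<omega> \<in> Y -` NN F X lam \<inter> space M" using \<omega> by simp
    qed
  qed
  with ex1 show ?thesis by blast
qed

end
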